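(* Let $x$ be a propositional variable and $\bot$ denote the constant $0$. Then (i) $x\leftrightarrow(\Box x)^2,\ \Box(x\leftrightarrow(\Box x)^2),\ \neg\Diamond\Box\bot\ \vdash_{4\mathcal{K}_{\omega\text{Ł}}}\ \neg x\vee x$; and (ii) $x\leftrightarrow(\Box x)^2,\ \Box(x\leftrightarrow(\Box x)^2),\ \neg\Diamond\Box\bot\ \not\vdash_{4\mathcal{K}_{\text{Ł}}}\ \neg x\vee x$.
   Context: $[0,1]_{\text{Ł}}$ is the standard MV-algebra on $[0,1]$ ($\wedge=\min$, $\vee=\max$, $a\cdot b=\max\{0,a+b-1\}$, $a\to b=\min\{1,1-a+b\}$, constants $0,1$); for $n\ge1$, $MV_n$ is its subalgebra on $\{0,\frac1n,\dots,\frac nn\}$. Modal formulas use $\wedge,\vee,\cdot,\to,0,1,\Box,\Diamond$; $x^2=x\cdot x$, $\neg x=x\to0$, $x\leftrightarrow y=(x\to y)\cdot(y\to x)$. An $\mathbf{A}$-Kripke model is $\langle W,R,e\rangle$ with $W\ne\emptyset$, crisp $R\subseteq W^2$, $e$ valuing variables at worlds in $\mathbf{A}$, extended world-wise homomorphically and by $e(v,\Box\varphi)=\inf_{Rvw}e(w,\varphi)$, $e(v,\Diamond\varphi)=\sup_{Rvw}e(w,\varphi)$ (the model being safe, i.e. these exist). $4\mathcal{K}_{\text{Ł}}$ is the class of $[0,1]_{\text{Ł}}$-Kripke models with transitive $R$; $4\mathcal{K}_{\omega\text{Ł}}$ is the class of safe Kripke models with transitive $R$ over some $MV_n$, $n\in\omega$.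 $\Gamma\vdash_{\mathcal{C}}\varphi$ means: for every model in $\mathcal{C}$ and world $v$, if all formulas of $\Gamma$ have value $1$ at $v$ then $\varphi$ has value $1$ at $v$. *)

theory Defs
  imports Main "HOL.Real"
begin

datatype fm =
    Var nat
  | Zero
  | One
  | Conj fm fm
  | Disj fm fm
  | Prod fm fm
  | Imp fm fm
  | Box fm
  | Dia fm

definition Sq :: "fm \<Rightarrow> fm" where "Sq x = Prod x x"
definition Neg :: "fm \<Rightarrow> fm" where "Neg x = Imp x Zero"
definition Iff :: "fm \<Rightarrow> fm \<Rightarrow> fm" where "Iff x y = Prod (Imp x y) (Imp y x)"

definition luk_prod :: "real \<Rightarrow> real \<Rightarrow> real" where "luk_prod a b = max 0 (a + b - 1)"
definition luk_imp :: "real \<Rightarrow> real \<Rightarrow> real" where "luk_imp a b = min 1 (1 - a + b)"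

text \<open>Box/Dia are the infimum/supremum over R-successors in W, computed in the complete
  lattice [0,1] (so the empty infimum is 1 and the empty supremum is 0).\<close>
primrec ev :: "'w set \<Rightarrow> ('w \<times> 'w) set \<Rightarrow> ('w \<Rightarrow> nat \<Rightarrow> real) \<Rightarrow> fm \<Rightarrow> 'w \<Rightarrow> real" where
  "ev W R e (Var p) = (\<lambda>w. e w p)"
| "ev W R e Zero = (\<lambda>w. 0)"
| "ev W R e One = (\<lambda>w. 1)"
| "ev W R e (Conj a b) = (\<lambda>w. min (ev W R e a w) (ev W R e b w))"
| "ev W R e (Disj a b) = (\<lambda>w. max (ev W R e a w) (ev W R e b w))"
| "ev W R e (Prod a b) = (\<lambda>w. luk_prod (ev W R e a w) (ev W R e b w))"
| "ev W R e (Imp a b) = (\<lambda>w. luk_imp (ev W R e a w) (ev W R e b w))"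
| "ev W R e (Box a) = (\<lambda>w. if {v \<in> W. (w, v) \<in> R} = {} then 1
        else Inf ((\<lambda>v. ev W R e a v) ` {v \<in> W. (w, v) \<in> R}))"
| "ev W R e (Dia a) = (\<lambda>w. if {v \<in> W. (w, v) \<in> R} = {} then 0
        else Sup ((\<lambda>v. ev W R e a v) ` {v \<in> W. (w, v) \<in> R}))"

definition MVn :: "nat \<Rightarrow> real set" where
  "MVn n = {real k / real n | k. k \<le> n}"

definition trans_model :: "real set \<Rightarrow> 'w set \<Rightarrow> ('w \<times> 'w) set \<Rightarrow> ('w \<Rightarrow> nat \<Rightarrow> real) \<Rightarrow> bool" where
  "trans_model A W R e \<longleftrightarrow> W \<noteq> {} \<and> R \<subseteq> W \<times> W \<and> trans R \<and> (\<forall>w\<in>W. \<forall>p. e w p \<in> A)"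

text \<open>Class 4K_L: transitive [0,1]_L-models (always safe, [0,1] being complete).\<close>
definition in_4K_L :: "'w set \<Rightarrow> ('w \<times> 'w) set \<Rightarrow> ('w \<Rightarrow> nat \<Rightarrow> real) \<Rightarrow> bool" where
  "in_4K_L W R e \<longleftrightarrow> trans_model {0..1} W R e"

text \<open>Class 4K_omegaL: transitive MV_n-models for some n >= 1 (always safe, MV_n being finite).\<close>
definition in_4K_omegaL :: "'w set \<Rightarrow> ('w \<times> 'w) set \<Rightarrow> ('w \<Rightarrow> nat \<Rightarrow> real) \<Rightarrow> bool" where
  "in_4K_omegaL W R e \<longleftrightarrow> (\<exists>n\<ge>1. trans_model (MVn n) W R e)"

definition conseq :: "'w itself \<Rightarrow> ('w set \<Rightarrow> ('w \<times> 'w) set \<Rightarrow> ('w \<Rightarrow> nat \<Rightarrow> real) \<Rightarrow> bool)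
    \<Rightarrow> fm set \<Rightarrow> fm \<Rightarrow> bool" where
  "conseq _ C \<Gamma> \<phi> \<longleftrightarrow> (\<forall>W R e. C W R e \<longrightarrow>
      (\<forall>v\<in>W. (\<forall>\<gamma>\<in>\<Gamma>. ev W R e \<gamma> v = 1) \<longrightarrow> ev W R e \<phi> v = 1))"

end

theory Submission
  imports Defs
begin

lemma iff1: "luk_prod (luk_imp a b) (luk_imp b a) = 1 \<longleftrightarrow> a = b"
  by (auto simp: luk_prod_def luk_imp_def)

lemma MVn_fin: "finite (MVn n)"
proof -
  have "MVn n = (\<lambda>k. real k / real n) ` {..n}" unfolding MVn_def by auto
  then show ?thesis by simp
qed

lemma MVn_01: "n \<ge> 1 \<Longrightarrow> t \<in> MVn n \<Longrightarrow> 0 \<le> t \<and> t \<le> 1"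
  unfolding MVn_def by (auto simp: divide_le_eq_1)

lemma part1:
  assumes n: "n \<ge> 1" and tm: "trans_model (MVn n) W R e" and v: "v \<in> W"
    and p1: "ev W R e (Iff (Var 0) (Sq (Box (Var 0)))) v = 1"
    and p2: "ev W R e (Box (Iff (Var 0) (Sq (Box (Var 0))))) v = 1"
    and p3: "ev W R e (Neg (Dia (Box Zero))) v = 1"
  shows "ev W R e (Disj (Neg (Var 0)) (Var 0)) v = 1"
proof -
  define x where "x = (\<lambda>w. e w 0)"
  define S where "S = (\<lambda>w. {u \<in> W. (w, u) \<in> R})"
  define B where "B = (\<lambda>w. if S w = {} then 1 else Inf (x ` S w))"
  have RW: "R \<subseteq> W \<times> W" and tr: "trans R" and val: "\<And>w. w \<in> W \<Longrightarrow> x w \<in> MVn n"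
    using tm unfolding trans_model_def x_def by auto
  have x01: "\<And>w. w \<in> W \<Longrightarrow> 0 \<le> x w \<and> x w \<le> 1" using val MVn_01 n by blast
  have evB: "ev W R e (Box (Var 0)) = B" by (rule ext) (auto simp add: B_def S_def x_def)
  have SW: "\<And>w. S w \<subseteq> W" unfolding S_def by auto
  have att: "\<And>w. S w \<noteq> {} \<Longrightarrow> \<exists>u \<in> S w. B w = x u \<and> (\<forall>u'\<in>S w. x u \<le> x u')"
  proof -
    fix w assume ne: "S w \<noteq> {}"
    have fin: "finite (x ` S w)" using val SW by (meson image_subsetI subset_eq MVn_fin finite_subset)
    have "B w = Min (x ` S w)" using ne fin by (simp add: B_def cInf_eq_Min)
    moreover have "Min (x ` S w) \<in> x ` S w" using fin ne by (intro Min_in) auto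
    ultimately show "\<exists>u \<in> S w. B w = x u \<and> (\<forall>u'\<in>S w. x u \<le> x u')"
      using fin by (metis (no_types, lifting) Min_le image_eqI imageE)
  qed
  have evI: "\<And>w. ev W R e (Iff (Var 0) (Sq (Box (Var 0)))) w = 1 \<longleftrightarrow> x w = luk_prod (B w) (B w)"
  proof -
    fix w
    have "ev W R e (Iff (Var 0) (Sq (Box (Var 0)))) w =
      luk_prod (luk_imp (x w) (luk_prod (B w) (B w))) (luk_imp (luk_prod (B w) (B w)) (x w))"
      unfolding Iff_def Sq_def ev.simps(6,7,1) evB x_def ..
    then show "?thesis w" by (simp add: iff1)
  qed
  have eq_v: "x v = luk_prod (B v) (B v)"
    using p1 evI by blast
  have eq_s: "\<And>w. w \<in> S v \<Longrightarrow> x w = luk_prod (B w) (B w)"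
  proof -
    fix w assume w: "w \<in> S v"
    let ?F = "(\<lambda>u. ev W R e (Iff (Var 0) (Sq (Box (Var 0)))) u) ` S v"
    have ne: "S v \<noteq> {}" using w by auto
    have "Inf ?F = 1" using p2 ne by (simp add: S_def split: if_splits)
    moreover have "bdd_below ?F"
      by (rule bdd_belowI[of _ 0]) (auto simp: Iff_def luk_prod_def)
    ultimately have "1 \<le> ev W R e (Iff (Var 0) (Sq (Box (Var 0)))) w"
      using w by (metis cInf_lower imageI)
    moreover have "ev W R e (Iff (Var 0) (Sq (Box (Var 0)))) w \<le> 1"
      by (simp add: Iff_def luk_prod_def luk_imp_def)
    ultimately have "ev W R e (Iff (Var 0) (Sq (Box (Var 0)))) w = 1" by linarith
    then show "x w = luk_prod (B w) (B w)"
      using evI by blast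
  qed
  have ne_s: "\<And>w. w \<in> S v \<Longrightarrow> S w \<noteq> {}"
  proof (rule ccontr)
    fix w assume w: "w \<in> S v" and "\<not> S w \<noteq> {}"
    then have bz: "ev W R e (Box Zero) w = 1" by (simp add: S_def)
    let ?F = "(\<lambda>u. ev W R e (Box Zero) u) ` S v"
    have ne: "S v \<noteq> {}" using w by auto
    have "luk_imp (Sup ?F) 0 = 1" using p3 ne by (simp add: Neg_def S_def split: if_splits)
    then have "Sup ?F \<le> 0" by (simp add: luk_imp_def)
    moreover have "bdd_above ?F"
      by (rule bdd_aboveI[of _ 1]) (auto simp: cInf_le_finite)
    ultimately show False using w bz
      by (metis cSup_upper imageI not_one_le_zero order_trans)
  qed
  have sub: "\<And>w. w \<in> S v \<Longrightarrow> S w \<subseteq> S v"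
    using tr unfolding S_def trans_def by blast
  have bin: "\<And>w. w \<in> S v \<Longrightarrow> x w = 0 \<or> x w = 1"
  proof (rule ccontr)
    fix w0 assume w0: "w0 \<in> S v" and c: "\<not> (x w0 = 0 \<or> x w0 = 1)"
    define T where "T = {x w | w. w \<in> S v \<and> 0 < x w \<and> x w < 1}"
    have finT: "finite T"
      using val SW unfolding T_def by (intro finite_subset[OF _ MVn_fin[of n]]) blast
    have "x w0 \<in> T" using w0 c x01 SW unfolding T_def by fastforce
    then have neT: "T \<noteq> {}" by auto
    obtain w where w: "w \<in> S v" "0 < x w" "x w < 1" "x w = Max T"
      using Max_in[OF finT neT] unfolding T_def by auto
    obtain u where u: "u \<in> S w" "B w = x u" using att ne_s w(1) by blast
    have uS: "u \<in> S v" using sub w(1) u(1) by blast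
    have "x w = max 0 (2 * x u - 1)" using eq_s[OF w(1)] u(2) by (simp add: luk_prod_def)
    then have "0 < x u" "x u < 1" "x w < x u" using w x01[of u] uS SW by auto
    then have "x u \<in> T" using uS unfolding T_def by blast
    then have "x u \<le> x w" using w(4) finT by simp
    then show False using \<open>x w < x u\<close> by simp
  qed
  have "x v = 0 \<or> x v = 1"
  proof (cases "S v = {}")
    case True then show ?thesis using eq_v by (simp add: B_def luk_prod_def)
  next
    case False
    then obtain u where "u \<in> S v" "B v = x u" using att by blast
    moreover have "x u = 0 \<or> x u = 1" using bin calculation by blast
    ultimately show ?thesis using eq_v by (auto simp: luk_prod_def)
  qed
  then show ?thesis by (auto simp: Neg_def luk_imp_def x_def)
qed

definition aa :: "nat \<Rightarrow> real" where "aa i = 1 - (1/2)^(Suc i)"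

lemma half_pow: "((1::real)/2)^k \<le> 2"
proof -
  have "((1::real)/2)^k \<le> 1" by (rule power_le_one) auto
  then show ?thesis by simp
qed

lemma aa_mono: "i < j \<Longrightarrow> aa (Suc i) \<le> aa j"
proof -
  assume "i < j"
  then have "((1::real)/2)^(Suc j) \<le> (1/2)^(Suc (Suc i))"
    by (intro power_decreasing) auto
  then show ?thesis by (simp add: aa_def)
qed

lemma aa_inf: "Inf (aa ` {j. i < j}) = aa (Suc i)"
  by (rule cInf_eq_minimum) (auto intro: aa_mono)

lemma aa_fix: "luk_prod (aa (Suc i)) (aa (Suc i)) = aa i"
proof -
  have h: "((1::real)/2)^(Suc (Suc i)) = (1/2)^(Suc i) / 2" by simp
  have "((1::real)/2)^i \<le> 1" by (simp add: power_le_one)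
  then show ?thesis unfolding luk_prod_def aa_def h by simp
qed

lemma part2:
  "\<not> conseq TYPE(nat) in_4K_L
           {Iff (Var 0) (Sq (Box (Var 0))), Box (Iff (Var 0) (Sq (Box (Var 0)))), Neg (Dia (Box Zero))}
           (Disj (Neg (Var 0)) (Var 0))"
proof -
  define W where "W = (UNIV :: nat set)"
  define R where "R = {(i, j). (i::nat) < j}"
  define e where "e = (\<lambda>(i::nat) (p::nat). aa i)"
  have S: "\<And>i. {v \<in> W. (i, v) \<in> R} = {j. i < j}" by (auto simp: W_def R_def)
  have ne: "\<And>i. {j. i < (j::nat)} \<noteq> {}" by auto
  have bx: "\<And>i. ev W R e (Box (Var 0)) i = aa (Suc i)"
  proof -
    fix i
    show "ev W R e (Box (Var 0)) i = aa (Suc i)"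
      using aa_inf[of i] ne[of i] by (simp only: ev.simps S) (simp add: e_def)
  qed
  have iff: "\<And>i. ev W R e (Iff (Var 0) (Sq (Box (Var 0)))) i = 1"
    unfolding Iff_def Sq_def ev.simps(6,7,1) bx iff1 aa_fix by (simp add: e_def)
  have b2: "ev W R e (Box (Iff (Var 0) (Sq (Box (Var 0))))) 0 = 1"
  proof -
    have "(\<lambda>v. ev W R e (Iff (Var 0) (Sq (Box (Var 0)))) v) ` {j. 0 < j} = {1}"
      using iff by auto
    then show ?thesis using ne by (simp only: ev.simps S) simp
  qed
  have bz: "\<And>i. ev W R e (Box Zero) i = 0"
  proof -
    fix i
    have "(\<lambda>v. ev W R e Zero v) ` {j. i < j} = {0}" by auto
    then show "ev W R e (Box Zero) i = 0" using ne by (simp only: ev.simps S) simp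
  qed
  have n3: "ev W R e (Neg (Dia (Box Zero))) 0 = 1"
  proof -
    have "(\<lambda>v. ev W R e (Box Zero) v) ` {j. 0 < j} = {0}" using bz by auto
    then have "ev W R e (Dia (Box Zero)) 0 = 0" using ne by (simp only: ev.simps S) simp
    then show ?thesis by (simp add: Neg_def luk_imp_def)
  qed
  have c: "ev W R e (Disj (Neg (Var 0)) (Var 0)) 0 \<noteq> 1"
    by (simp add: Neg_def luk_imp_def e_def aa_def)
  have m: "in_4K_L W R e"
    unfolding in_4K_L_def trans_model_def W_def R_def e_def
    by (auto simp: trans_def aa_def half_pow)
  have "\<exists>W R e. in_4K_L W R e \<and> (\<exists>v\<in>(W::nat set). (\<forall>\<gamma>\<in>{Iff (Var 0) (Sq (Box (Var 0))), Box (Iff (Var 0) (Sq (Box (Var 0)))), Neg (Dia (Box Zero))}. ev W R e \<gamma> v = 1) \<and> ev W R e (Disj (Neg (Var 0)) (Var 0)) v \<noteq> 1)"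
    apply (rule exI[of _ W], rule exI[of _ R], rule exI[of _ e])
    using m iff[of 0] b2 n3 c unfolding W_def by blast
  then show ?thesis unfolding conseq_def by blast
qed

theorem mainTheorem5:
  shows "conseq TYPE('w) in_4K_omegaL
           {Iff (Var 0) (Sq (Box (Var 0))), Box (Iff (Var 0) (Sq (Box (Var 0)))), Neg (Dia (Box Zero))}
           (Disj (Neg (Var 0)) (Var 0))
       \<and> \<not> conseq TYPE(nat) in_4K_L
           {Iff (Var 0) (Sq (Box (Var 0))), Box (Iff (Var 0) (Sq (Box (Var 0)))), Neg (Dia (Box Zero))}
           (Disj (Neg (Var 0)) (Var 0))"
proof
  show "conseq TYPE('w) in_4K_omegaL
           {Iff (Var 0) (Sq (Box (Var 0))), Box (Iff (Var 0) (Sq (Box (Var 0)))), Neg (Dia (Box Zero))}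
           (Disj (Neg (Var 0)) (Var 0))"
    unfolding conseq_def
  proof (intro allI impI ballI)
    fix W :: "'w set" and R e v
    assume "in_4K_omegaL W R e" and v: "v \<in> W"
      and g: "\<forall>\<gamma>\<in>{Iff (Var 0) (Sq (Box (Var 0))), Box (Iff (Var 0) (Sq (Box (Var 0)))), Neg (Dia (Box Zero))}. ev W R e \<gamma> v = 1"
    then obtain n where n: "n \<ge> 1" and tm: "trans_model (MVn n) W R e" unfolding in_4K_omegaL_def by blast
    have p1: "ev W R e (Iff (Var 0) (Sq (Box (Var 0)))) v = 1" using g by blast
    have p2: "ev W R e (Box (Iff (Var 0) (Sq (Box (Var 0))))) v = 1" using g by blast
    have p3: "ev W R e (Neg (Dia (Box Zero))) v = 1" using g by blast
    show "ev W R e (Disj (Neg (Var 0)) (Var 0)) v = 1"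
      by (rule part1[OF n tm v p1 p2 p3])
  qed
qed (rule part2)

end
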